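(* Let $(E\to M,\rho,\langle\cdot,\cdot\rangle,[\cdot,\cdot])$ be a Courant algebroid, $\mathcal{G}$ a generalized metric and $\operatorname{div}$ a divergence operator on $E$, and let $D$ be a metric generalized connection with divergence $\operatorname{div}$ and pure-type torsion, with total generalized Ricci curvature $\mathrm{Ric}$. Then $\mathrm{Ric}$ is symmetric if and only if the pair $(\mathcal{G},\operatorname{div})$ is compatible, i.e. \[\operatorname{div}([a_\mp,b_\pm])-\mathcal{L}_{\rho a_\mp}(\operatorname{div}b_\pm)+\mathcal{L}_{\rho b_\pm}(\operatorname{div}a_\mp)=0\quad\text{for all }a_\mp\in\Gamma(V_\mp),\ b_\pm\in\Gamma(V_\pm).\]
   Context: A Courant algebroid $(E\to M,\rho,\langle\cdot,\cdot\rangle,[\cdot,\cdot])$: vector bundle $E$ with nondegenerate symmetric form, anchor $\rho:E\to TM$ and bracket on $\Gamma(E)$ with $[a,[b,c]]=[[a,b],c]+[b,[a,c]]$, $\mathcal{L}_{\rho a}\langle b,c\rangle=\langle[a,b],c\rangle+\langle b,[a,c]\rangle$, $2[a,a]=\rho^*d\langle a,a\rangle$. A generalized connection is a linear $D:\Gamma(E)\to\Gamma(E^*\otimes E)$ with $D(fa)=fDa+\rho^*df\otimes a$ and $\rho^*d\langle a,b\rangle=\langle Da,b\rangle+\langle a,Db\rangle$; $D_ba:=(Da)(b)$, $(Da)^*$ is the adjoint of $b\mapsto D_ba$. Naive curvature $\mathcal{R}_0(a,b)c:=D_aD_bc-D_bD_ac-D_{[a,b]}c$. A generalized metric is a self-adjoint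 $\mathcal{G}\in\operatorname{End}E$ with $\mathcal{G}^2=1$; $V_\pm=\ker(\mathcal{G}\mp1)$, $x_\pm:=\tfrac12(1\pm\mathcal{G})x$. $D$ is metric if it preserves $\Gamma(V_\pm)$. A divergence operator is linear $\operatorname{div}:\Gamma(E)\to C^\infty(M)$ with $\operatorname{div}(fa)=f\operatorname{div}a+\mathcal{L}_{\rho a}f$; $D$ has divergence $\operatorname{div}$ if $\operatorname{div}a=\operatorname{tr}(Da)$. Torsion $T(a,b):=D_ab-D_ba-[a,b]+(Da)^*b\in\Gamma(\wedge^3E^* )$ is of pure type if $T\in\Gamma(\wedge^3V_+\oplus\wedge^3V_-)$. Total curvature $\mathcal{R}(a,b):=\mathcal{R}_0(a_+,b_-)+\mathcal{R}_0(a_-,b_+)$; total generalized Ricci curvature $\mathrm{Ric}(a,b):=\operatorname{tr}(c\mapsto\mathcal{R}(c,a)b)$, a section of $E^*\otimes E^*$. *)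

theory Defs
  imports Complex_Main
begin

text \<open>Algebraic (Serre--Swan) model of a Courant algebroid E over M:
  'f plays the role of the ring of smooth functions C^infinity(M) (a commutative real algebra),
  's the module of smooth sections Gamma(E) (finitely generated projective, expressed through
  a finite dual frame with respect to the nondegenerate pairing), vector fields are derivations
  of 'f.\<close>

record ('f, 's) courant =
  cmul :: "'f \<Rightarrow> 's \<Rightarrow> 's"
  anc  :: "'s \<Rightarrow> 'f \<Rightarrow> 'f"     \<comment> \<open>anc a f = L_{rho a} f\<close>
  ip   :: "'s \<Rightarrow> 's \<Rightarrow> 'f"
  br   :: "'s \<Rightarrow> 's \<Rightarrow> 's"

definition ca_frame :: "('f::comm_ring_1, 's::ab_group_add) courant \<Rightarrow> nat \<Rightarrow> (nat \<Rightarrow> 's) \<Rightarrow> (nat \<Rightarrow> 's) \<Rightarrow> bool" where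
  "ca_frame C n e e' \<longleftrightarrow> (\<forall>x. x = (\<Sum>i<n. cmul C (ip C (e' i) x) (e i)))"

text \<open>rho^* d f: the section c with pairing c x = L_{rho x} f.\<close>
definition ca_dstar :: "('f::comm_ring_1, 's::ab_group_add) courant \<Rightarrow> 'f \<Rightarrow> 's" where
  "ca_dstar C f = (THE c. \<forall>x. ip C c x = anc C x f)"

definition courant_algebroid :: "('f::{comm_ring_1,real_algebra_1}, 's::real_vector) courant \<Rightarrow> bool" where
  "courant_algebroid C \<longleftrightarrow>
    \<comment> \<open>module structure over the function ring\<close>
    (\<forall>f a b. cmul C f (a + b) = cmul C f a + cmul C f b) \<and>
    (\<forall>f g a. cmul C (f + g) a = cmul C f a + cmul C g a) \<and>
    (\<forall>f g a. cmul C (f * g) a = cmul C f (cmul C g a)) \<and>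
    (\<forall>a. cmul C 1 a = a) \<and>
    (\<forall>r a. cmul C (of_real r) a = r *\<^sub>R a) \<and>
    \<comment> \<open>anchor: function-linear map to derivations (vector fields)\<close>
    (\<forall>a b f. anc C (a + b) f = anc C a f + anc C b f) \<and>
    (\<forall>g a f. anc C (cmul C g a) f = g * anc C a f) \<and>
    (\<forall>a f g. anc C a (f + g) = anc C a f + anc C a g) \<and>
    (\<forall>a r f. anc C a (r *\<^sub>R f) = r *\<^sub>R anc C a f) \<and>
    (\<forall>a f g. anc C a (f * g) = f * anc C a g + g * anc C a f) \<and>
    \<comment> \<open>pairing: symmetric, function-bilinear, nondegenerate\<close>
    (\<forall>a b. ip C a b = ip C b a) \<and>
    (\<forall>a b c. ip C (a + b) c = ip C a c + ip C b c) \<and>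
    (\<forall>f a b. ip C (cmul C f a) b = f * ip C a b) \<and>
    (\<forall>a. (\<forall>x. ip C a x = 0) \<longrightarrow> a = 0) \<and>
    \<comment> \<open>Gamma(E) finitely generated projective; pairing induces Gamma(E) = Gamma(E^*)\<close>
    (\<exists>n e e'. ca_frame C n e e') \<and>
    \<comment> \<open>bracket: real bilinear\<close>
    (\<forall>a b c. br C (a + b) c = br C a c + br C b c) \<and>
    (\<forall>a b c. br C a (b + c) = br C a b + br C a c) \<and>
    (\<forall>r a b. br C (r *\<^sub>R a) b = r *\<^sub>R br C a b) \<and>
    (\<forall>r a b. br C a (r *\<^sub>R b) = r *\<^sub>R br C a b) \<and>
    \<comment> \<open>Courant axioms\<close>
    (\<forall>a b c. br C a (br C b c) = br C (br C a b) c + br C b (br C a c)) \<and>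
    (\<forall>a b c. anc C a (ip C b c) = ip C (br C a b) c + ip C b (br C a c)) \<and>
    (\<forall>a. 2 *\<^sub>R br C a a = ca_dstar C (ip C a a))"

definition ca_trace :: "('f::comm_ring_1, 's::ab_group_add) courant \<Rightarrow> ('s \<Rightarrow> 's) \<Rightarrow> 'f" where
  "ca_trace C T = (case (SOME (n, e, e'). ca_frame C n e e') of
      (n, e, e') \<Rightarrow> (\<Sum>i<n. ip C (e' i) (T (e i))))"

text \<open>D b a stands for D_b a.\<close>
definition gen_connection :: "('f::{comm_ring_1,real_algebra_1}, 's::real_vector) courant \<Rightarrow> ('s \<Rightarrow> 's \<Rightarrow> 's) \<Rightarrow> bool" where
  "gen_connection C D \<longleftrightarrow>
    (\<forall>b b' a. D (b + b') a = D b a + D b' a) \<and>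
    (\<forall>f b a. D (cmul C f b) a = cmul C f (D b a)) \<and>
    (\<forall>b a a'. D b (a + a') = D b a + D b a') \<and>
    (\<forall>b f a. D b (cmul C f a) = cmul C f (D b a) + cmul C (anc C b f) a) \<and>
    (\<forall>x a c. anc C x (ip C a c) = ip C (D x a) c + ip C a (D x c))"

definition gen_metric :: "('f::{comm_ring_1,real_algebra_1}, 's::real_vector) courant \<Rightarrow> ('s \<Rightarrow> 's) \<Rightarrow> bool" where
  "gen_metric C G \<longleftrightarrow>
    (\<forall>a b. G (a + b) = G a + G b) \<and>
    (\<forall>f a. G (cmul C f a) = cmul C f (G a)) \<and>
    (\<forall>a b. ip C (G a) b = ip C a (G b)) \<and>
    (\<forall>a. G (G a) = a)"

definition pplus :: "('s::real_vector \<Rightarrow> 's) \<Rightarrow> 's \<Rightarrow> 's" where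
  "pplus G x = (1/2) *\<^sub>R (x + G x)"

definition pminus :: "('s::real_vector \<Rightarrow> 's) \<Rightarrow> 's \<Rightarrow> 's" where
  "pminus G x = (1/2) *\<^sub>R (x - G x)"

definition metric_connection :: "('s::real_vector \<Rightarrow> 's) \<Rightarrow> ('s \<Rightarrow> 's \<Rightarrow> 's) \<Rightarrow> bool" where
  "metric_connection G D \<longleftrightarrow>
    (\<forall>b a. G a = a \<longrightarrow> G (D b a) = D b a) \<and>
    (\<forall>b a. G a = - a \<longrightarrow> G (D b a) = - D b a)"

definition divergence_op :: "('f::{comm_ring_1,real_algebra_1}, 's::real_vector) courant \<Rightarrow> ('s \<Rightarrow> 'f) \<Rightarrow> bool" where
  "divergence_op C dv \<longleftrightarrow>
    (\<forall>a b. dv (a + b) = dv a + dv b) \<and>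
    (\<forall>r a. dv (r *\<^sub>R a) = r *\<^sub>R dv a) \<and>
    (\<forall>f a. dv (cmul C f a) = f * dv a + anc C a f)"

definition has_divergence :: "('f::comm_ring_1, 's::ab_group_add) courant \<Rightarrow> ('s \<Rightarrow> 's \<Rightarrow> 's) \<Rightarrow> ('s \<Rightarrow> 'f) \<Rightarrow> bool" where
  "has_divergence C D dv \<longleftrightarrow> (\<forall>a. dv a = ca_trace C (\<lambda>b. D b a))"

text \<open>(Da)^* b : the section c with pairing c x = pairing (D_x a) b.\<close>
definition conn_adj :: "('f::comm_ring_1, 's::ab_group_add) courant \<Rightarrow> ('s \<Rightarrow> 's \<Rightarrow> 's) \<Rightarrow> 's \<Rightarrow> 's \<Rightarrow> 's" where
  "conn_adj C D a b = (THE c. \<forall>x. ip C c x = ip C (D x a) b)"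

definition torsion :: "('f::comm_ring_1, 's::ab_group_add) courant \<Rightarrow> ('s \<Rightarrow> 's \<Rightarrow> 's) \<Rightarrow> 's \<Rightarrow> 's \<Rightarrow> 's" where
  "torsion C D a b = D a b - D b a - br C a b + conn_adj C D a b"

text \<open>T in Gamma(wedge^3 V+ + wedge^3 V-): the trilinear form only has pure-type components.\<close>
definition pure_type_torsion :: "('f::{comm_ring_1,real_algebra_1}, 's::real_vector) courant \<Rightarrow> ('s \<Rightarrow> 's) \<Rightarrow> ('s \<Rightarrow> 's \<Rightarrow> 's) \<Rightarrow> bool" where
  "pure_type_torsion C G D \<longleftrightarrow>
    (\<forall>a b c. ip C (torsion C D a b) c =
       ip C (torsion C D (pplus G a) (pplus G b)) (pplus G c)
     + ip C (torsion C D (pminus G a) (pminus G b)) (pminus G c))"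

definition naive_curv :: "('f, 's::ab_group_add) courant \<Rightarrow> ('s \<Rightarrow> 's \<Rightarrow> 's) \<Rightarrow> 's \<Rightarrow> 's \<Rightarrow> 's \<Rightarrow> 's" where
  "naive_curv C D a b c = D a (D b c) - D b (D a c) - D (br C a b) c"

definition total_curv :: "('f, 's::real_vector) courant \<Rightarrow> ('s \<Rightarrow> 's) \<Rightarrow> ('s \<Rightarrow> 's \<Rightarrow> 's) \<Rightarrow> 's \<Rightarrow> 's \<Rightarrow> 's \<Rightarrow> 's" where
  "total_curv C G D a b c = naive_curv C D (pplus G a) (pminus G b) c
                          + naive_curv C D (pminus G a) (pplus G b) c"

definition total_ricci :: "('f::comm_ring_1, 's::real_vector) courant \<Rightarrow> ('s \<Rightarrow> 's) \<Rightarrow> ('s \<Rightarrow> 's \<Rightarrow> 's) \<Rightarrow> 's \<Rightarrow> 's \<Rightarrow> 'f" where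
  "total_ricci C G D a b = ca_trace C (\<lambda>c. total_curv C G D c a b)"

definition compatible_pair :: "('f::comm_ring_1, 's::real_vector) courant \<Rightarrow> ('s \<Rightarrow> 's) \<Rightarrow> ('s \<Rightarrow> 'f) \<Rightarrow> bool" where
  "compatible_pair C G dv \<longleftrightarrow>
    (\<forall>a b. ((G a = - a \<and> G b = b) \<or> (G a = a \<and> G b = - b)) \<longrightarrow>
       dv (br C a b) - anc C a (dv b) + anc C b (dv a) = 0)"

end

theory Submission
  imports Defs
begin

locale CA =
  fixes C :: "('f::{comm_ring_1,real_algebra_1}, 's::real_vector) courant"
    and G :: "'s \<Rightarrow> 's" and dv :: "'s \<Rightarrow> 'f" and D :: "'s \<Rightarrow> 's \<Rightarrow> 's"
  assumes ca: "courant_algebroid C" and gm: "gen_metric C G" and dvop: "divergence_op C dv"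
    and gc: "gen_connection C D" and mc: "metric_connection G D" and hd: "has_divergence C D dv"
    and pt: "pure_type_torsion C G D"
begin

lemmas cax = ca[unfolded courant_algebroid_def]

abbreviation cm where "cm \<equiv> cmul C"
abbreviation ipp where "ipp \<equiv> ip C"
abbreviation an where "an \<equiv> anc C"
abbreviation tr where "tr \<equiv> ca_trace C"
abbreviation Pp where "Pp \<equiv> pplus G"
abbreviation Pm where "Pm \<equiv> pminus G"

lemma cm_add: "cm f (a + b) = cm f a + cm f b" using cax[THEN conjunct1] by blast
lemma cm_addf: "cm (f + g) a = cm f a + cm g a" using cax[THEN conjunct2, THEN conjunct1] by blast
lemma cm_mult: "cm (f * g) a = cm f (cm g a)" using cax[THEN conjunct2, THEN conjunct2, THEN conjunct1] by blast
lemma cm_one: "cm 1 a = a" using cax[THEN conjunct2, THEN conjunct2, THEN conjunct2, THEN conjunct1] by blast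
lemma cm_real: "cm (of_real r) a = r *\<^sub>R a" using cax[THEN conjunct2, THEN conjunct2, THEN conjunct2, THEN conjunct2, THEN conjunct1] by blast
lemma an_add: "an (a + b) f = an a f + an b f" using cax[THEN conjunct2, THEN conjunct2, THEN conjunct2, THEN conjunct2, THEN conjunct2, THEN conjunct1] by blast
lemma an_cm: "an (cm g a) f = g * an a f" using cax[THEN conjunct2, THEN conjunct2, THEN conjunct2, THEN conjunct2, THEN conjunct2, THEN conjunct2, THEN conjunct1] by blast
lemma an_addf: "an a (f + g) = an a f + an a g" using cax[THEN conjunct2, THEN conjunct2, THEN conjunct2, THEN conjunct2, THEN conjunct2, THEN conjunct2, THEN conjunct2, THEN conjunct1] by blast
lemma an_scale: "an a (r *\<^sub>R f) = r *\<^sub>R an a f" using cax[THEN conjunct2, THEN conjunct2, THEN conjunct2, THEN conjunct2, THEN conjunct2, THEN conjunct2, THEN conjunct2, THEN conjunct2, THEN conjunct1] by blast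
lemma an_mult: "an a (f * g) = f * an a g + g * an a f" using cax[THEN conjunct2, THEN conjunct2, THEN conjunct2, THEN conjunct2, THEN conjunct2, THEN conjunct2, THEN conjunct2, THEN conjunct2, THEN conjunct2, THEN conjunct1] by blast
lemma ip_sym: "ipp a b = ipp b a" using cax[THEN conjunct2, THEN conjunct2, THEN conjunct2, THEN conjunct2, THEN conjunct2, THEN conjunct2, THEN conjunct2, THEN conjunct2, THEN conjunct2, THEN conjunct2, THEN conjunct1] by blast
lemma ip_add: "ipp (a + b) c = ipp a c + ipp b c" using cax[THEN conjunct2, THEN conjunct2, THEN conjunct2, THEN conjunct2, THEN conjunct2, THEN conjunct2, THEN conjunct2, THEN conjunct2, THEN conjunct2, THEN conjunct2, THEN conjunct2, THEN conjunct1] by blast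
lemma ip_cm: "ipp (cm f a) b = f * ipp a b" using cax[THEN conjunct2, THEN conjunct2, THEN conjunct2, THEN conjunct2, THEN conjunct2, THEN conjunct2, THEN conjunct2, THEN conjunct2, THEN conjunct2, THEN conjunct2, THEN conjunct2, THEN conjunct2, THEN conjunct1] by blast
lemma nondeg: "(\<And>x. ipp a x = 0) \<Longrightarrow> a = 0" using cax[THEN conjunct2, THEN conjunct2, THEN conjunct2, THEN conjunct2, THEN conjunct2, THEN conjunct2, THEN conjunct2, THEN conjunct2, THEN conjunct2, THEN conjunct2, THEN conjunct2, THEN conjunct2, THEN conjunct2, THEN conjunct1] by blast
lemma frame_ex: "\<exists>n e e'. ca_frame C n e e'" using cax[THEN conjunct2, THEN conjunct2, THEN conjunct2, THEN conjunct2, THEN conjunct2, THEN conjunct2, THEN conjunct2, THEN conjunct2, THEN conjunct2, THEN conjunct2, THEN conjunct2, THEN conjunct2, THEN conjunct2, THEN conjunct2, THEN conjunct1] by blast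
lemma br_add1: "br C (a + b) c = br C a c + br C b c" using cax[THEN conjunct2, THEN conjunct2, THEN conjunct2, THEN conjunct2, THEN conjunct2, THEN conjunct2, THEN conjunct2, THEN conjunct2, THEN conjunct2, THEN conjunct2, THEN conjunct2, THEN conjunct2, THEN conjunct2, THEN conjunct2, THEN conjunct2, THEN conjunct1] by blast
lemma br_add2: "br C a (b + c) = br C a b + br C a c" using cax[THEN conjunct2, THEN conjunct2, THEN conjunct2, THEN conjunct2, THEN conjunct2, THEN conjunct2, THEN conjunct2, THEN conjunct2, THEN conjunct2, THEN conjunct2, THEN conjunct2, THEN conjunct2, THEN conjunct2, THEN conjunct2, THEN conjunct2, THEN conjunct2, THEN conjunct1] by blast

lemma br_zero1[simp]: "br C 0 b = 0" using br_add1[of 0 0 b] by simp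
lemma br_zero2[simp]: "br C a 0 = 0" using br_add2[of a 0 0] by simp

lemma cm_zero[simp]: "cm 0 a = 0" using cm_addf[of 0 0 a] by simp
lemma cm_zero2[simp]: "cm f 0 = 0" using cm_add[of f 0 0] by simp
lemma cm_minus: "cm f (- a) = - cm f a"
  using cm_add[of f a "-a"] by (simp add: eq_neg_iff_add_eq_0 add.commute)
lemma cm_diff: "cm f (a - b) = cm f a - cm f b"
  by (metis cm_add cm_minus diff_conv_add_uminus)
lemma cm_minusf: "cm (- f) a = - cm f a"
  using cm_addf[of f "-f" a] by (simp add: eq_neg_iff_add_eq_0 add.commute)
lemma cm_difff: "cm (f - g) a = cm f a - cm g a"
  by (metis cm_addf cm_minusf diff_conv_add_uminus)
lemma cm_sum: "cm f (sum x A) = (\<Sum>i\<in>A. cm f (x i))"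
  by (induct A rule: infinite_finite_induct) (simp_all add: cm_add)
lemma cm_sumf: "cm (sum g A) a = (\<Sum>i\<in>A. cm (g i) a)"
  by (induct A rule: infinite_finite_induct) (simp_all add: cm_addf)
lemma cm_scaleR: "cm f (r *\<^sub>R a) = r *\<^sub>R cm f a"
proof -
  have "cm f (r *\<^sub>R a) = cm f (cm (of_real r) a)" by (simp add: cm_real)
  also have "\<dots> = cm (of_real r * f) a" by (simp add: cm_mult[symmetric] mult.commute)
  also have "\<dots> = r *\<^sub>R cm f a" by (simp add: cm_mult cm_real)
  finally show ?thesis .
qed

lemma ip_add2: "ipp c (a + b) = ipp c a + ipp c b" by (metis ip_sym ip_add)
lemma ip_cm2: "ipp a (cm f b) = f * ipp a b" by (metis ip_sym ip_cm)
lemma ip_zero[simp]: "ipp 0 b = 0" using ip_add[of 0 0 b] by simp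
lemma ip_zero2[simp]: "ipp a 0 = 0" using ip_add2[of a 0 0] by simp
lemma ip_minus: "ipp (- a) b = - ipp a b" using ip_add[of a "-a" b] by (simp add: eq_neg_iff_add_eq_0 add.commute)
lemma ip_minus2: "ipp b (- a) = - ipp b a" by (metis ip_sym ip_minus)
lemma ip_diff: "ipp (a - c) b = ipp a b - ipp c b" by (metis ip_add ip_minus diff_conv_add_uminus)
lemma ip_diff2: "ipp b (a - c) = ipp b a - ipp b c" by (metis ip_sym ip_diff)
lemma ip_sum: "ipp (sum x A) c = (\<Sum>i\<in>A. ipp (x i) c)"
  by (induct A rule: infinite_finite_induct) (simp_all add: ip_add)
lemma ip_sum2: "ipp c (sum x A) = (\<Sum>i\<in>A. ipp c (x i))"
  by (induct A rule: infinite_finite_induct) (simp_all add: ip_add2)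
lemma nondeg_eq: "(\<And>x. ipp a x = ipp b x) \<Longrightarrow> a = b"
  using nondeg[of "a - b"] by (simp add: ip_diff)

lemma an_zero[simp]: "an a 0 = 0" using an_addf[of a 0 0] by simp
lemma an_zero_sec[simp]: "an 0 f = 0" using an_add[of 0 0 f] by simp
lemma an_sum: "an a (sum g A) = (\<Sum>i\<in>A. an a (g i))"
  by (induct A rule: infinite_finite_induct) (simp_all add: an_addf)

definition FR :: "nat \<times> (nat \<Rightarrow> 's) \<times> (nat \<Rightarrow> 's)" where
  "FR = (SOME (n, e, e'). ca_frame C n e e')"
abbreviation "N \<equiv> fst FR"
abbreviation "E \<equiv> fst (snd FR)"
abbreviation "E' \<equiv> snd (snd FR)"

lemma frame: "ca_frame C N E E'"
proof -
  obtain n e e' where "ca_frame C n e e'" using frame_ex by blast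
  then have "(\<lambda>(n, e, e'). ca_frame C n e e') (n, e, e')" by simp
  then have "(\<lambda>(n, e, e'). ca_frame C n e e') FR" unfolding FR_def by (rule someI)
  then show ?thesis by (simp add: split_def)
qed

lemma tr_def2: "tr T = (\<Sum>i<N. ipp (E' i) (T (E i)))"
  unfolding ca_trace_def FR_def[symmetric] by (simp add: split_def)

lemma expand: "x = (\<Sum>i<N. cm (ipp (E' i) x) (E i))"
  using frame unfolding ca_frame_def by blast

lemma ip_expand: "ipp u x = (\<Sum>i<N. ipp (E' i) x * ipp u (E i))"
proof -
  have e: "(\<Sum>i<N. cm (ipp (E' i) x) (E i)) = x" by (rule expand[symmetric])
  have "ipp u x = ipp u (\<Sum>i<N. cm (ipp (E' i) x) (E i))" by (simp only: e)
  also have "\<dots> = (\<Sum>i<N. ipp (E' i) x * ipp u (E i))" by (simp add: ip_sum2 ip_cm2)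
  finally show ?thesis .
qed


definition lin :: "('s \<Rightarrow> 's) \<Rightarrow> bool" where
  "lin T \<longleftrightarrow> (\<forall>x y. T (x + y) = T x + T y) \<and> (\<forall>f x. T (cm f x) = cm f (T x))"

lemma lin_add: "lin T \<Longrightarrow> T (x + y) = T x + T y" unfolding lin_def by blast
lemma lin_cm: "lin T \<Longrightarrow> T (cm f x) = cm f (T x)" unfolding lin_def by blast
lemma lin_zero: "lin T \<Longrightarrow> T 0 = 0" using lin_add[of T 0 0] by simp
lemma lin_minus: "lin T \<Longrightarrow> T (- x) = - T x"
proof -
  assume l: "lin T"
  have "T x + T (-x) = 0" using lin_add[OF l, of x "-x"] lin_zero[OF l] by simp
  then show ?thesis by (metis minus_unique)
qed
lemma lin_diff: "lin T \<Longrightarrow> T (x - y) = T x - T y"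
  by (metis lin_add lin_minus diff_conv_add_uminus)
lemma lin_sum: "lin T \<Longrightarrow> T (\<Sum>i\<in>A. cm (g i) (x i)) = (\<Sum>i\<in>A. cm (g i) (T (x i)))"
  by (induct A rule: infinite_finite_induct) (simp_all add: lin_zero lin_add lin_cm)

lemma tr_add: "tr (\<lambda>c. F c + H c) = tr F + tr H"
  by (simp add: tr_def2 ip_add2 sum.distrib)
lemma tr_diff: "tr (\<lambda>c. F c - H c) = tr F - tr H"
  by (simp add: tr_def2 ip_diff2 sum_subtractf)
lemma tr_zero: "tr (\<lambda>c. 0) = 0"
  by (simp add: tr_def2)

lemma tr_expand:
  assumes "lin A"
  shows "tr (\<lambda>c. A (B c)) = (\<Sum>i<N. \<Sum>j<N. ipp (E' j) (B (E i)) * ipp (E' i) (A (E j)))"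
proof -
  have "ipp (E' i) (A (B (E i))) = (\<Sum>j<N. ipp (E' j) (B (E i)) * ipp (E' i) (A (E j)))" for i
  proof -
    have "B (E i) = (\<Sum>j<N. cm (ipp (E' j) (B (E i))) (E j))" by (rule expand)
    then have "A (B (E i)) = A (\<Sum>j<N. cm (ipp (E' j) (B (E i))) (E j))" by (rule arg_cong[where f=A])
    also have "\<dots> = (\<Sum>j<N. cm (ipp (E' j) (B (E i))) (A (E j)))" by (rule lin_sum[OF assms])
    finally show ?thesis by (simp add: ip_sum2 ip_cm2)
  qed
  then show ?thesis by (simp add: tr_def2)
qed

lemma tr_cyclic:
  assumes "lin A" "lin B"
  shows "tr (\<lambda>c. A (B c)) = tr (\<lambda>c. B (A c))"
  unfolding tr_expand[OF assms(1)] tr_expand[OF assms(2)]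
  by (subst sum.swap) (simp add: mult.commute)

lemmas gcx = gc[unfolded gen_connection_def]
lemma D_add1: "D (b + b') a = D b a + D b' a" using gcx by blast
lemma D_cm1: "D (cm f b) a = cm f (D b a)" using gcx by blast
lemma D_add2: "D b (a + a') = D b a + D b a'" using gcx by blast
lemma D_leib: "D b (cm f a) = cm f (D b a) + cm (an b f) a" using gcx by blast
lemma D_ip: "an x (ipp a c) = ipp (D x a) c + ipp a (D x c)" using gcx by blast

lemma lin_D1: "lin (\<lambda>b. D b a)" unfolding lin_def by (simp add: D_add1 D_cm1)
lemma D_zero1[simp]: "D 0 a = 0" using lin_zero[OF lin_D1] by simp
lemma D_diff1: "D (b - b') a = D b a - D b' a" using lin_diff[OF lin_D1] by simp
lemma D_zero2[simp]: "D b 0 = 0" using D_add2[of b 0 0] by simp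
lemma D_minus2: "D b (- a) = - D b a"
proof -
  have "D b a + D b (-a) = 0" using D_add2[of b a "-a"] by simp
  then show ?thesis by (metis minus_unique)
qed
lemma D_diff2: "D b (a - a') = D b a - D b a'"
  by (metis D_add2 D_minus2 diff_conv_add_uminus)
lemma D_sum2: "D b (sum x A) = (\<Sum>i\<in>A. D b (x i))"
  by (induct A rule: infinite_finite_induct) (simp_all add: D_add2)

lemma Q0: "(\<Sum>j<N. cm (ipp (D x (E' j)) y) (E j)) + (\<Sum>j<N. cm (ipp (E' j) y) (D x (E j))) = 0"
proof -
  have ex: "(\<Sum>j<N. cm (ipp (E' j) (D x y)) (E j)) = D x y" by (rule expand[symmetric])
  have "y = (\<Sum>j<N. cm (ipp (E' j) y) (E j))" by (rule expand)
  then have "D x y = D x (\<Sum>j<N. cm (ipp (E' j) y) (E j))" by (rule arg_cong[where f="D x"])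
  also have "\<dots> = (\<Sum>j<N. cm (ipp (E' j) y) (D x (E j)) + cm (an x (ipp (E' j) y)) (E j))"
    by (simp add: D_sum2 D_leib)
  also have "\<dots> = (\<Sum>j<N. cm (ipp (E' j) y) (D x (E j))) + (\<Sum>j<N. cm (ipp (D x (E' j)) y) (E j))
       + (\<Sum>j<N. cm (ipp (E' j) (D x y)) (E j))"
    by (simp add: D_ip cm_addf sum.distrib add.assoc)
  also have "\<dots> = (\<Sum>j<N. cm (ipp (E' j) y) (D x (E j))) + (\<Sum>j<N. cm (ipp (D x (E' j)) y) (E j))
       + D x y" by (simp only: ex)
  finally show ?thesis by (simp add: add.commute)
qed

lemma tr_deriv:
  assumes S: "lin S"
  shows "tr (\<lambda>c. D x (S c)) - tr (\<lambda>c. S (D x c)) = an x (tr S)"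
proof -
  let ?Q = "\<lambda>y. (\<Sum>j<N. cm (ipp (D x (E' j)) y) (E j)) + (\<Sum>j<N. cm (ipp (E' j) y) (D x (E j)))"
  have z: "(\<Sum>i<N. ipp (E' i) (S (?Q (E i)))) = 0" by (simp only: Q0 lin_zero[OF S]) simp
  have "(\<Sum>i<N. ipp (E' i) (S (?Q (E i)))) =
     (\<Sum>i<N. (\<Sum>j<N. ipp (D x (E' j)) (E i) * ipp (E' i) (S (E j)))
            + (\<Sum>j<N. ipp (E' j) (E i) * ipp (E' i) (S (D x (E j)))))"
    by (simp add: lin_add[OF S] lin_sum[OF S] ip_add2 ip_sum2 ip_cm2)
  also have "\<dots> = (\<Sum>i<N. \<Sum>j<N. ipp (D x (E' j)) (E i) * ipp (E' i) (S (E j)))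
            + (\<Sum>i<N. \<Sum>j<N. ipp (E' j) (E i) * ipp (E' i) (S (D x (E j))))"
    by (rule sum.distrib)
  also have "\<dots> = (\<Sum>j<N. \<Sum>i<N. ipp (D x (E' j)) (E i) * ipp (E' i) (S (E j)))
            + (\<Sum>j<N. \<Sum>i<N. ipp (E' j) (E i) * ipp (E' i) (S (D x (E j))))"
    by (rule arg_cong2[where f="(+)"]; rule sum.swap)
  also have "\<dots> = (\<Sum>j<N. ipp (D x (E' j)) (S (E j))) + (\<Sum>j<N. ipp (E' j) (S (D x (E j))))"
  proof -
    have e1: "(\<Sum>i<N. ipp (D x (E' j)) (E i) * ipp (E' i) (S (E j))) = ipp (D x (E' j)) (S (E j))" for j
      by (subst ip_expand[of "D x (E' j)" "S (E j)"]) (simp add: mult.commute)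
    have e2: "(\<Sum>i<N. ipp (E' j) (E i) * ipp (E' i) (S (D x (E j)))) = ipp (E' j) (S (D x (E j)))" for j
      by (subst ip_expand[of "E' j" "S (D x (E j))"]) (simp add: mult.commute)
    show ?thesis by (simp only: e1 e2)
  qed
  finally have k: "(\<Sum>j<N. ipp (D x (E' j)) (S (E j))) + (\<Sum>j<N. ipp (E' j) (S (D x (E j)))) = 0"
    using z by simp
  have "an x (tr S) = (\<Sum>j<N. ipp (D x (E' j)) (S (E j))) + tr (\<lambda>c. D x (S c))"
    by (simp add: tr_def2 an_sum D_ip sum.distrib)
  then show ?thesis using k unfolding tr_def2 by (simp add: algebra_simps eq_neg_iff_add_eq_0)
qed


lemmas gmx = gm[unfolded gen_metric_def]
lemma G_add: "G (a + b) = G a + G b" using gmx by blast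
lemma G_cm: "G (cm f a) = cm f (G a)" using gmx by blast
lemma G_sa: "ipp (G a) b = ipp a (G b)" using gmx by blast
lemma G_inv: "G (G a) = a" using gmx by blast
lemma G_scaleR: "G (r *\<^sub>R a) = r *\<^sub>R G a" by (metis G_cm cm_real)
lemma G_zero: "G 0 = 0" using G_add[of 0 0] by simp
lemma G_minus: "G (- a) = - G a"
proof -
  have "G a + G (-a) = 0" using G_add[of a "-a"] G_zero by simp
  then show ?thesis by (metis minus_unique)
qed
lemma G_diff: "G (a - b) = G a - G b" by (metis G_add G_minus diff_conv_add_uminus)

lemma half_half: "(1/2::real) *\<^sub>R x + (1/2::real) *\<^sub>R x = (x::'s)"
  by (metis field_sum_of_halves scaleR_left_distrib scaleR_one)

lemma P_sum: "Pp x + Pm x = x"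
proof -
  have "Pp x + Pm x = (1/2::real) *\<^sub>R x + (1/2::real) *\<^sub>R x"
    unfolding pplus_def pminus_def by (simp add: scaleR_add_right scaleR_diff_right)
  then show ?thesis by (simp only: half_half)
qed
lemma G_Pp: "G (Pp x) = Pp x"
  unfolding pplus_def by (simp add: G_scaleR G_add G_inv add.commute)
lemma G_Pm: "G (Pm x) = - Pm x"
  unfolding pminus_def by (simp add: G_scaleR G_diff G_inv scaleR_diff_right)
lemma Pp_plus: "G y = y \<Longrightarrow> Pp y = y"
  unfolding pplus_def by (simp add: half_half scaleR_add_right)
lemma Pm_plus: "G y = y \<Longrightarrow> Pm y = 0"
  unfolding pminus_def by simp
lemma Pp_minus: "G y = - y \<Longrightarrow> Pp y = 0"
  unfolding pplus_def by simp
lemma Pm_minus: "G y = - y \<Longrightarrow> Pm y = y"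
  unfolding pminus_def by (simp add: half_half scaleR_add_right)
lemma Pp_iff: "Pp y = y \<longleftrightarrow> G y = y" by (metis G_Pp Pp_plus)
lemma Pm_iff: "Pm y = y \<longleftrightarrow> G y = - y" by (metis G_Pm Pm_minus)

lemma lin_Pp: "lin Pp"
  unfolding lin_def pplus_def by (simp add: G_add G_cm cm_add cm_scaleR algebra_simps)
lemma lin_Pm: "lin Pm"
  unfolding lin_def pminus_def by (simp add: G_add G_cm cm_add cm_diff cm_scaleR algebra_simps)

lemma two_zero: "(x::'f) = - x \<Longrightarrow> x = 0"
proof -
  assume "x = - x"
  then have "x + x = 0" by (metis add.right_inverse)
  then have "(2::real) *\<^sub>R x = 0" by (simp add: scaleR_2)
  then show ?thesis by simp
qed

lemma orth: "G u = u \<Longrightarrow> G v = - v \<Longrightarrow> ipp u v = 0"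
proof -
  assume u: "G u = u" and v: "G v = - v"
  have "ipp u v = ipp (G u) v" using u by simp
  also have "\<dots> = ipp u (G v)" by (rule G_sa)
  also have "\<dots> = - ipp u v" using v by (simp add: ip_minus2)
  finally show ?thesis by (rule two_zero)
qed

lemmas mcx = mc[unfolded metric_connection_def]
lemma mc_p: "G a = a \<Longrightarrow> G (D b a) = D b a" using mcx by blast
lemma mc_m: "G a = - a \<Longrightarrow> G (D b a) = - D b a" using mcx by blast

definition cp :: "('s \<Rightarrow> 's) \<Rightarrow> ('s \<Rightarrow> 's) \<Rightarrow> bool" where
  "cp P1 P2 \<longleftrightarrow> (P1 = Pp \<and> P2 = Pm) \<or> (P1 = Pm \<and> P2 = Pp)"

lemma cp_pm: "cp Pp Pm" unfolding cp_def by simp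
lemma cp_mp: "cp Pm Pp" unfolding cp_def by simp
lemma cp_sym: "cp P1 P2 \<Longrightarrow> cp P2 P1" unfolding cp_def by blast
lemma cp_sum: "cp P1 P2 \<Longrightarrow> P1 x + P2 x = x"
  unfolding cp_def using P_sum by (metis add.commute)
lemma cp_idem: "cp P1 P2 \<Longrightarrow> P1 (P1 x) = P1 x"
  unfolding cp_def using G_Pp G_Pm Pp_plus Pm_minus by metis
lemma cp_kill: "cp P1 P2 \<Longrightarrow> P2 (P1 x) = 0"
  unfolding cp_def using G_Pp G_Pm Pm_plus Pp_minus by metis
lemma cp_lin: "cp P1 P2 \<Longrightarrow> lin P1"
  unfolding cp_def using lin_Pp lin_Pm by metis
lemma cp_V: "cp P1 P2 \<Longrightarrow> P1 x = x \<Longrightarrow> P2 x = 0"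
  by (metis cp_kill)
lemma cp_pres: "cp P1 P2 \<Longrightarrow> P1 a = a \<Longrightarrow> P1 (D b a) = D b a"
  unfolding cp_def using Pp_iff Pm_iff mc_p mc_m by metis
lemma cp_orth: "cp P1 P2 \<Longrightarrow> P1 x = x \<Longrightarrow> P2 y = y \<Longrightarrow> ipp x y = 0"
  unfolding cp_def using Pp_iff Pm_iff orth ip_sym by metis
lemma cp_comm: "cp P1 P2 \<Longrightarrow> P1 (D b x) = D b (P1 x)"
proof -
  assume c: "cp P1 P2"
  have c2: "cp P2 P1" using c by (rule cp_sym)
  have "D b x = D b (P1 x) + D b (P2 x)" using cp_sum[OF c, of x] D_add2 by metis
  then have "P1 (D b x) = P1 (D b (P1 x)) + P1 (D b (P2 x))" using lin_add[OF cp_lin[OF c]] by metis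
  also have "P1 (D b (P1 x)) = D b (P1 x)" using cp_pres[OF c] cp_idem[OF c] by metis
  also have "P1 (D b (P2 x)) = 0"
    using cp_pres[OF c2, of "P2 x" b] cp_idem[OF c2] cp_kill[OF c2] by metis
  finally show ?thesis by simp
qed

lemma conn_adj0: "(\<And>z. ipp (D z x) y = 0) \<Longrightarrow> conn_adj C D x y = 0"
  unfolding conn_adj_def
proof (rule the_equality)
  assume "\<And>z. ipp (D z x) y = 0"
  then show "\<forall>z. ipp 0 z = ipp (D z x) y" by simp
  fix c assume "\<forall>z. ipp c z = ipp (D z x) y"
  then show "c = 0" using \<open>\<And>z. ipp (D z x) y = 0\<close> nondeg by metis
qed

lemma torsion_0a[simp]: "torsion C D 0 b = 0"
  unfolding torsion_def by (simp add: conn_adj0)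
lemma torsion_a0[simp]: "torsion C D a 0 = 0"
  unfolding torsion_def by (simp add: conn_adj0)

lemmas ptx = pt[unfolded pure_type_torsion_def]

lemma tors_mixed:
  assumes c: "cp P1 P2" and x: "P1 x = x" and y: "P2 y = y"
  shows "br C x y = D x y - D y x"
proof -
  have T0: "torsion C D x y = 0"
  proof (rule nondeg)
    fix z
    have "ipp (torsion C D x y) z = ipp (torsion C D (Pp x) (Pp y)) (Pp z)
        + ipp (torsion C D (Pm x) (Pm y)) (Pm z)" using ptx by blast
    moreover have "(Pm x = 0 \<and> Pp y = 0) \<or> (Pp x = 0 \<and> Pm y = 0)"
      using c x y cp_V cp_sym unfolding cp_def by metis
    ultimately show "ipp (torsion C D x y) z = 0" by auto
  qed
  have CA: "conn_adj C D x y = 0"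
  proof (rule conn_adj0)
    fix z show "ipp (D z x) y = 0" using cp_orth[OF c _ y] cp_pres[OF c x] by metis
  qed
  show ?thesis using T0 CA unfolding torsion_def by (simp add: algebra_simps)
qed


lemmas dvx = dvop[unfolded divergence_op_def]
lemma dv_add: "dv (a + b) = dv a + dv b" using dvx by blast
lemma dv_diff: "dv (a - b) = dv a - dv b"
proof -
  have "dv (a - b) + dv b = dv a" using dv_add[of "a - b" b] by simp
  then show ?thesis by (simp add: algebra_simps)
qed
lemma dv_tr: "dv w = tr (\<lambda>c. D c w)" using hd unfolding has_divergence_def by blast

lemma dv_proj:
  assumes c: "cp P1 P2" and w: "P2 w = w"
  shows "tr (\<lambda>c. D (P2 c) w) = dv w"
proof -
  have c2: "cp P2 P1" using c by (rule cp_sym)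
  have "dv w = tr (\<lambda>c. D (P1 c) w + D (P2 c) w)"
    unfolding dv_tr by (simp add: D_add1[symmetric] cp_sum[OF c])
  also have "\<dots> = tr (\<lambda>c. D (P1 c) w) + tr (\<lambda>c. D (P2 c) w)" by (rule tr_add)
  also have "tr (\<lambda>c. D (P1 c) w) = 0"
  proof -
    have lB: "lin (\<lambda>c. D (P1 c) w)"
      using cp_lin[OF c] unfolding lin_def by (simp add: D_add1 D_cm1)
    have "tr (\<lambda>c. D (P1 c) w) = tr (\<lambda>c. P2 (D (P1 c) w))"
      using cp_pres[OF c2 w] by simp
    also have "\<dots> = tr (\<lambda>c. D (P1 (P2 c)) w)"
      by (rule tr_cyclic[OF cp_lin[OF c2] lB])
    also have "\<dots> = 0" using cp_kill[OF c2] lin_zero[OF cp_lin[OF c]] by (simp add: tr_zero)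
    finally show ?thesis .
  qed
  finally show ?thesis by simp
qed

lemma naive_zero2[simp]: "naive_curv C D x 0 b = 0" unfolding naive_curv_def by simp
lemma naive_zero1[simp]: "naive_curv C D 0 u v = 0" unfolding naive_curv_def by simp

lemma tc_reduce:
  assumes c: "cp P1 P2" and a: "P1 a = a"
  shows "total_curv C G D c a b = naive_curv C D (P2 c) a b"
  using c a cp_V[OF c a] unfolding cp_def total_curv_def by auto

lemma ric_formula:
  assumes c: "cp P1 P2" and a: "P1 a = a" and b: "P2 b = b"
  shows "total_ricci C G D a b = dv (D a b) - an a (dv b) - tr (\<lambda>c. D (D (P2 c) a) b)"
proof -
  have c2: "cp P2 P1" using c by (rule cp_sym)
  let ?S = "\<lambda>c. D (P2 c) b"
  have lS: "lin ?S" using cp_lin[OF c2] unfolding lin_def by (simp add: D_add1 D_cm1)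
  have nc: "naive_curv C D (P2 c) a b = D (P2 c) (D a b) - (D a (?S c) - ?S (D a c)) - D (D (P2 c) a) b" for c
  proof -
    have "br C (P2 c) a = D (P2 c) a - D a (P2 c)" using tors_mixed[OF c2 cp_idem[OF c2] a] .
    moreover have "D a (P2 c) = P2 (D a c)" using cp_comm[OF c2] by simp
    ultimately have br: "br C (P2 c) a = D (P2 c) a - P2 (D a c)" by simp
    show ?thesis unfolding naive_curv_def br D_diff1 by (simp add: algebra_simps)
  qed
  have "total_ricci C G D a b = tr (\<lambda>c. naive_curv C D (P2 c) a b)"
    unfolding total_ricci_def using tc_reduce[OF c a] by simp
  also have "\<dots> = tr (\<lambda>c. D (P2 c) (D a b)) - tr (\<lambda>c. D a (?S c) - ?S (D a c)) - tr (\<lambda>c. D (D (P2 c) a) b)"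
    by (simp only: nc tr_diff)
  also have "tr (\<lambda>c. D (P2 c) (D a b)) = dv (D a b)"
    by (rule dv_proj[OF c cp_pres[OF c2 b]])
  also have "tr (\<lambda>c. D a (?S c) - ?S (D a c)) = an a (dv b)"
    by (simp only: tr_diff tr_deriv[OF lS] dv_proj[OF c b])
  finally show ?thesis .
qed

lemma X_swap:
  assumes c: "cp P1 P2" and a: "P1 a = a" and b: "P2 b = b"
  shows "tr (\<lambda>c. D (D (P2 c) a) b) = tr (\<lambda>c. D (D (P1 c) b) a)"
proof -
  have c2: "cp P2 P1" using c by (rule cp_sym)
  have lA: "lin (\<lambda>c. D (P2 c) a)" using cp_lin[OF c2] unfolding lin_def by (simp add: D_add1 D_cm1)
  have lB: "lin (\<lambda>c. D (P1 c) b)" using cp_lin[OF c] unfolding lin_def by (simp add: D_add1 D_cm1)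
  have "tr (\<lambda>c. D (D (P2 c) a) b) = tr (\<lambda>c. D (P1 (D (P2 c) a)) b)"
    using cp_pres[OF c a] by simp
  also have "\<dots> = tr (\<lambda>c. D (P2 (D (P1 c) b)) a)"
    by (rule tr_cyclic[OF lB lA])
  also have "\<dots> = tr (\<lambda>c. D (D (P1 c) b) a)"
    using cp_pres[OF c2 b] by simp
  finally show ?thesis .
qed

lemma ric_diff:
  assumes c: "cp P1 P2" and a: "P1 a = a" and b: "P2 b = b"
  shows "total_ricci C G D a b - total_ricci C G D b a = dv (br C a b) - an a (dv b) + an b (dv a)"
proof -
  have c2: "cp P2 P1" using c by (rule cp_sym)
  show ?thesis
  proof -
    have d: "dv (br C a b) = dv (D a b) - dv (D b a)" using tors_mixed[OF c a b] by (simp add: dv_diff)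
    show ?thesis unfolding ric_formula[OF c a b] ric_formula[OF c2 b a] X_swap[OF c a b] d
      by (simp add: algebra_simps)
  qed
qed


lemma naive_add1: "naive_curv C D (x + y) u v = naive_curv C D x u v + naive_curv C D y u v"
  unfolding naive_curv_def by (simp add: D_add1 D_add2 br_add1 algebra_simps)
lemma naive_add2: "naive_curv C D x (u1 + u2) v = naive_curv C D x u1 v + naive_curv C D x u2 v"
  unfolding naive_curv_def by (simp add: D_add1 D_add2 br_add2 algebra_simps)
lemma naive_add3: "naive_curv C D x u (v1 + v2) = naive_curv C D x u v1 + naive_curv C D x u v2"
  unfolding naive_curv_def by (simp add: D_add1 D_add2 algebra_simps)

lemma naive_cm:
  assumes c: "cp P1 P2" and u: "P1 u = u" and x: "P2 x = x"
  shows "naive_curv C D (cm f x) u v = cm f (naive_curv C D x u v)"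
proof -
  have c2: "cp P2 P1" using c by (rule cp_sym)
  have x2: "P2 (cm f x) = cm f x" using lin_cm[OF cp_lin[OF c2]] x by simp
  have b1: "br C (cm f x) u = D (cm f x) u - D u (cm f x)" by (rule tors_mixed[OF c2 x2 u])
  have b2: "br C x u = D x u - D u x" by (rule tors_mixed[OF c2 x u])
  show ?thesis unfolding naive_curv_def b1 b2
    by (simp add: D_cm1 D_leib D_diff1 D_diff2 D_add1 cm_diff cm_add algebra_simps)
qed

lemma ric_zero:
  assumes c: "cp P1 P2" and u: "P1 u = u" and v: "P1 v = v"
  shows "total_ricci C G D u v = 0"
proof -
  have c2: "cp P2 P1" using c by (rule cp_sym)
  let ?S = "\<lambda>c. naive_curv C D (P2 c) u v"
  have lS: "lin ?S" unfolding lin_def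
  proof (intro conjI allI)
    fix x y show "?S (x + y) = ?S x + ?S y"
      by (simp add: lin_add[OF cp_lin[OF c2]] naive_add1)
  next
    fix f x show "?S (cm f x) = cm f (?S x)"
      by (simp add: lin_cm[OF cp_lin[OF c2]] naive_cm[OF c u cp_idem[OF c2]])
  qed
  have S1: "P1 (?S c) = ?S c" for c
  proof -
    have l: "lin P1" by (rule cp_lin[OF c])
    have p: "\<And>b a. P1 a = a \<Longrightarrow> P1 (D b a) = D b a" by (rule cp_pres[OF c])
    show ?thesis unfolding naive_curv_def by (simp add: lin_diff[OF l] p v)
  qed
  have "total_ricci C G D u v = tr ?S"
    unfolding total_ricci_def using tc_reduce[OF c u] by simp
  also have "\<dots> = tr (\<lambda>c. P1 (?S c))" by (simp only: S1)
  also have "\<dots> = tr (\<lambda>c. ?S (P1 c))" by (rule tr_cyclic[OF cp_lin[OF c] lS])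
  also have "\<dots> = 0" by (simp add: cp_kill[OF c] tr_zero)
  finally show ?thesis .
qed

lemma ric_add1: "total_ricci C G D (a1 + a2) b = total_ricci C G D a1 b + total_ricci C G D a2 b"
  unfolding total_ricci_def tr_add[symmetric] total_curv_def
  by (simp add: lin_add[OF lin_Pp] lin_add[OF lin_Pm] naive_add2 algebra_simps)
lemma ric_add2: "total_ricci C G D a (b1 + b2) = total_ricci C G D a b1 + total_ricci C G D a b2"
  unfolding total_ricci_def tr_add[symmetric] total_curv_def
  by (simp add: naive_add3 algebra_simps)

theorem main: "(\<forall>a b. total_ricci C G D a b = total_ricci C G D b a) \<longleftrightarrow> compatible_pair C G dv"
proof
  assume sym: "\<forall>a b. total_ricci C G D a b = total_ricci C G D b a"
  show "compatible_pair C G dv" unfolding compatible_pair_def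
  proof (intro allI impI)
    fix a b assume h: "(G a = - a \<and> G b = b) \<or> (G a = a \<and> G b = - b)"
    then show "dv (br C a b) - an a (dv b) + an b (dv a) = 0"
    proof
      assume "G a = - a \<and> G b = b"
      then have "Pm a = a" "Pp b = b" using Pm_iff Pp_iff by auto
      from ric_diff[OF cp_mp this] sym show ?thesis by simp
    next
      assume "G a = a \<and> G b = - b"
      then have "Pp a = a" "Pm b = b" using Pm_iff Pp_iff by auto
      from ric_diff[OF cp_pm this] sym show ?thesis by simp
    qed
  qed
next
  assume cpt: "compatible_pair C G dv"
  show "\<forall>a b. total_ricci C G D a b = total_ricci C G D b a"
  proof (intro allI)
    fix x y
    let ?R = "total_ricci C G D"
    have xp: "Pp (Pp x) = Pp x" "Pm (Pm x) = Pm x" "Pp (Pp y) = Pp y" "Pm (Pm y) = Pm y"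
      using cp_idem[OF cp_pm] cp_idem[OF cp_mp] by auto
    have dx: "x = Pp x + Pm x" "y = Pp y + Pm y" using P_sum by auto
    have "?R x y = ?R (Pp x) (Pp y) + ?R (Pp x) (Pm y) + (?R (Pm x) (Pp y) + ?R (Pm x) (Pm y))"
      by (subst dx(1), subst dx(2)) (simp add: ric_add1 ric_add2)
    also have "\<dots> = ?R (Pp x) (Pm y) + ?R (Pm x) (Pp y)"
      using ric_zero[OF cp_pm xp(1) xp(3)] ric_zero[OF cp_mp xp(2) xp(4)] by simp
    finally have e1: "?R x y = ?R (Pp x) (Pm y) + ?R (Pm x) (Pp y)" .
    have "?R y x = ?R (Pp y) (Pp x) + ?R (Pp y) (Pm x) + (?R (Pm y) (Pp x) + ?R (Pm y) (Pm x))"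
      by (subst dx(1), subst dx(2)) (simp add: ric_add1 ric_add2)
    also have "\<dots> = ?R (Pp y) (Pm x) + ?R (Pm y) (Pp x)"
      using ric_zero[OF cp_pm xp(3) xp(1)] ric_zero[OF cp_mp xp(4) xp(2)] by simp
    finally have e2: "?R y x = ?R (Pp y) (Pm x) + ?R (Pm y) (Pp x)" .
    have k1: "?R (Pp x) (Pm y) - ?R (Pm y) (Pp x) = 0"
    proof -
      have "G (Pp x) = Pp x" "G (Pm y) = - Pm y" using G_Pp G_Pm by auto
      then show ?thesis unfolding ric_diff[OF cp_pm xp(1) xp(4)]
        using cpt unfolding compatible_pair_def by blast
    qed
    have k2: "?R (Pm x) (Pp y) - ?R (Pp y) (Pm x) = 0"
    proof -
      have "G (Pm x) = - Pm x" "G (Pp y) = Pp y" using G_Pp G_Pm by auto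
      then show ?thesis unfolding ric_diff[OF cp_mp xp(2) xp(3)]
        using cpt unfolding compatible_pair_def by blast
    qed
    show "?R x y = ?R y x" unfolding e1 e2 using k1 k2 by (simp add: algebra_simps)
  qed
qed

end

theorem theorem4p6:
  fixes C :: "('f::{comm_ring_1,real_algebra_1}, 's::real_vector) courant"
    and G :: "'s \<Rightarrow> 's" and dv :: "'s \<Rightarrow> 'f" and D :: "'s \<Rightarrow> 's \<Rightarrow> 's"
  assumes "courant_algebroid C"
    and "gen_metric C G"
    and "divergence_op C dv"
    and "gen_connection C D"
    and "metric_connection G D"
    and "has_divergence C D dv"
    and "pure_type_torsion C G D"
  shows "(\<forall>a b. total_ricci C G D a b = total_ricci C G D b a) \<longleftrightarrow> compatible_pair C G dv"
proof -
  interpret CA C G dv D using assms by (unfold_locales)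
  show ?thesis by (rule main)
qed

end
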